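(* Let $g\ge2$, let $C$ be a stable curve of compact type of genus $g$, and let $X$ be an irreducible component of $C$. Let $M$ be an $X$-quasistable line bundle on $C$ of multidegree $\underline d$ (of total degree $d$), and let $M'$ be a line bundle on $C$ of degree $1$ on $X$ and degree $0$ on every other component. Then the line bundle $$M\otimes M'\otimes\mathcal O_C\Big(-\sum_{Z\in\mathcal T_{\underline d}(X)}Z\Big)$$ is $X$-quasistable.
   Context: All curves are connected, projective, reduced, nodal, over an algebraically closed field; $g_C=1-\chi(\mathcal O_C)$. Subcurve: union of irreducible components; $Y'$ is the closure of the complement, $k_Y=\#(Y\cap Y')$. Tail: subcurve $Z$ with $k_Z=1$. Compact type: every node separating. Stable: every smooth rational component meets the rest in $\ge3$ points. Multidegree of $L$: $(\deg L|_{X_i})_i$, total degree $d$, $d_Y=\sum_{X_i\subseteq Y}d_i$. $\deg\omega_C|_Y=2g_Y-2+k_Y$. A multidegree $\underline d$ of total degree $d$ is semistable if $|d_Y-\frac{d}{2g-2}\deg\omega_C|_Y|\le k_Y/2$ for all non-empty proper subcurves $Y$, and $X$-quasistable if in addition $d_Y-\frac{d}{2g-2}\deg\omega_C|_Y>-k_Y/2$ for every proper subcurve $Y\supseteq X$; a line bundle is semistable/$X$-quasistable if its multidegree is. For a tail $Z$ with $Z\cap Z'=\{n\}$, $\mathcal O_C(Z)$ is the line bundle with restrictions $\mathcal O_Z(-n)$ on $Z$ and $\mathcal O_{Z'}(n)$ on $Z'$. Given a multidegree $\underline d$ of total degree $d$, a tail $Z$ is $\underline d$-big if $d_Z\cdot\deg\omega_C-d\cdot\deg(\omega_C|_Z)<2g_Z-g_C$,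 and $\mathcal T_{\underline d}(X)$ is the set of $\underline d$-big tails $Z$ with $X\not\subseteq Z$. *)

theory Defs
  imports Complex_Main
begin

text \<open>Combinatorial model of a connected projective reduced nodal curve C:
  comps = set of irreducible components, nodes = set of nodes,
  ends n = set of components through node n (one component for a self-node,
  two for a node joining distinct components), ggen v = geometric genus of
  (the normalization of) component v.\<close>

record ('v, 'n) nodal_curve =
  comps :: "'v set"
  nodes :: "'n set"
  ends  :: "'n \<Rightarrow> 'v set"
  ggen  :: "'v \<Rightarrow> nat"

definition adj_rel :: "('v, 'n) nodal_curve \<Rightarrow> 'n set \<Rightarrow> ('v \<times> 'v) set" where
  "adj_rel C N' = {(u, w). \<exists>n\<in>N'. u \<in> ends C n \<and> w \<in> ends C n}"

definition connected_without :: "('v, 'n) nodal_curve \<Rightarrow> 'n set \<Rightarrow> bool" where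
  "connected_without C N' \<longleftrightarrow>
     (\<forall>u\<in>comps C. \<forall>w\<in>comps C. (u, w) \<in> (adj_rel C (nodes C - N'))\<^sup>*)"

definition wf_curve :: "('v, 'n) nodal_curve \<Rightarrow> bool" where
  "wf_curve C \<longleftrightarrow> finite (comps C) \<and> comps C \<noteq> {} \<and> finite (nodes C) \<and>
     (\<forall>n\<in>nodes C. ends C n \<subseteq> comps C \<and> (card (ends C n) = 1 \<or> card (ends C n) = 2))
     \<and> connected_without C {}"

definition separating :: "('v, 'n) nodal_curve \<Rightarrow> 'n \<Rightarrow> bool" where
  "separating C n \<longleftrightarrow> \<not> connected_without C {n}"

definition compact_type :: "('v, 'n) nodal_curve \<Rightarrow> bool" where
  "compact_type C \<longleftrightarrow> (\<forall>n\<in>nodes C. separating C n)"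

definition k_sub :: "('v, 'n) nodal_curve \<Rightarrow> 'v set \<Rightarrow> nat" where
  "k_sub C Y = card {n\<in>nodes C. ends C n \<inter> Y \<noteq> {} \<and> ends C n \<inter> (comps C - Y) \<noteq> {}}"

text \<open>chi(O_Y) = sum of chi of normalized components minus number of nodes of Y.\<close>
definition chi_sub :: "('v, 'n) nodal_curve \<Rightarrow> 'v set \<Rightarrow> int" where
  "chi_sub C Y = (\<Sum>v\<in>Y. 1 - int (ggen C v)) - int (card {n\<in>nodes C. ends C n \<subseteq> Y})"

definition genus_sub :: "('v, 'n) nodal_curve \<Rightarrow> 'v set \<Rightarrow> int" where
  "genus_sub C Y = 1 - chi_sub C Y"

definition genus :: "('v, 'n) nodal_curve \<Rightarrow> int" where
  "genus C = genus_sub C (comps C)"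

definition deg_omega :: "('v, 'n) nodal_curve \<Rightarrow> 'v set \<Rightarrow> int" where
  "deg_omega C Y = 2 * genus_sub C Y - 2 + int (k_sub C Y)"

definition stable :: "('v, 'n) nodal_curve \<Rightarrow> bool" where
  "stable C \<longleftrightarrow> (\<forall>v\<in>comps C. ggen C v = 0 \<and> (\<forall>n\<in>nodes C. ends C n \<noteq> {v})
                     \<longrightarrow> k_sub C {v} \<ge> 3)"

type_synonym 'v multideg = "'v \<Rightarrow> int"

definition deg_sub :: "'v multideg \<Rightarrow> 'v set \<Rightarrow> int" where
  "deg_sub md Y = (\<Sum>v\<in>Y. md v)"

definition total_deg :: "('v, 'n) nodal_curve \<Rightarrow> 'v multideg \<Rightarrow> int" where
  "total_deg C md = deg_sub md (comps C)"

definition balance :: "('v, 'n) nodal_curve \<Rightarrow> 'v multideg \<Rightarrow> 'v set \<Rightarrow> real" where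
  "balance C md Y = real_of_int (deg_sub md Y)
     - real_of_int (total_deg C md) / real_of_int (2 * genus C - 2) * real_of_int (deg_omega C Y)"

definition semistable :: "('v, 'n) nodal_curve \<Rightarrow> 'v multideg \<Rightarrow> bool" where
  "semistable C md \<longleftrightarrow> (\<forall>Y. Y \<subseteq> comps C \<and> Y \<noteq> {} \<and> Y \<noteq> comps C \<longrightarrow>
      \<bar>balance C md Y\<bar> \<le> real (k_sub C Y) / 2)"

definition quasistable :: "('v, 'n) nodal_curve \<Rightarrow> 'v \<Rightarrow> 'v multideg \<Rightarrow> bool" where
  "quasistable C X md \<longleftrightarrow> semistable C md \<and>
     (\<forall>Y. Y \<subseteq> comps C \<and> Y \<noteq> comps C \<and> X \<in> Y \<longrightarrow> balance C md Y > - real (k_sub C Y) / 2)"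

definition is_tail :: "('v, 'n) nodal_curve \<Rightarrow> 'v set \<Rightarrow> bool" where
  "is_tail C Z \<longleftrightarrow> Z \<subseteq> comps C \<and> k_sub C Z = 1"

definition big_tail :: "('v, 'n) nodal_curve \<Rightarrow> 'v multideg \<Rightarrow> 'v set \<Rightarrow> bool" where
  "big_tail C md Z \<longleftrightarrow> is_tail C Z \<and>
     deg_sub md Z * (2 * genus C - 2) - total_deg C md * deg_omega C Z < 2 * genus_sub C Z - genus C"

definition big_tails :: "('v, 'n) nodal_curve \<Rightarrow> 'v multideg \<Rightarrow> 'v \<Rightarrow> 'v set set" where
  "big_tails C md X = {Z. big_tail C md Z \<and> X \<notin> Z}"

text \<open>Multidegree of O_C(Z) for a tail Z meeting Z' in the single node n:
  -1 on the component of Z through n, +1 on the component of Z' through n.\<close>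
definition mdeg_OZ :: "('v, 'n) nodal_curve \<Rightarrow> 'v set \<Rightarrow> 'v multideg" where
  "mdeg_OZ C Z v = (\<Sum>n\<in>{n\<in>nodes C. ends C n \<inter> Z \<noteq> {} \<and> ends C n \<inter> (comps C - Z) \<noteq> {}}.
       if v \<in> ends C n then (if v \<in> Z then -1 else 1) else 0)"

definition unit_mdeg :: "'v \<Rightarrow> 'v multideg" where
  "unit_mdeg X v = (if v = X then 1 else 0)"

end

theory Submission imports Defs begin

locale CT =
  fixes C :: "('v,'n) nodal_curve" and X :: 'v
  assumes wf: "wf_curve C" and cpt: "compact_type C" and stb: "stable C"
    and g2: "genus C \<ge> 2" and Xc: "X \<in> comps C"
begin

lemma fin_comps: "finite (comps C)" using wf by (simp add: wf_curve_def)
lemma fin_nodes: "finite (nodes C)" using wf by (simp add: wf_curve_def)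
lemma ends_sub: "n \<in> nodes C \<Longrightarrow> ends C n \<subseteq> comps C" using wf by (simp add: wf_curve_def)
lemma conn: "u \<in> comps C \<Longrightarrow> w \<in> comps C \<Longrightarrow> (u,w) \<in> (adj_rel C (nodes C))\<^sup>*"
  using wf by (simp add: wf_curve_def connected_without_def)

lemma adj_sym: "(u,w) \<in> adj_rel C N \<Longrightarrow> (w,u) \<in> adj_rel C N"
  unfolding adj_rel_def by auto

lemma rtr_sym: "(u,w) \<in> (adj_rel C N)\<^sup>* \<Longrightarrow> (w,u) \<in> (adj_rel C N)\<^sup>*"
  by (induction rule: rtrancl_induct) (auto intro: converse_rtrancl_into_rtrancl adj_sym)

lemma closed_reach:
  assumes "(v,x) \<in> (adj_rel C N)\<^sup>*" "v \<in> S"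
    "\<And>m p q. m \<in> N \<Longrightarrow> p \<in> ends C m \<Longrightarrow> q \<in> ends C m \<Longrightarrow> p \<in> S \<Longrightarrow> q \<in> S"
  shows "x \<in> S"
  using assms(1)
proof (induction rule: rtrancl_induct)
  case base then show ?case using assms(2) .
next
  case (step y z)
  then obtain m where "m \<in> N" "y \<in> ends C m" "z \<in> ends C m" by (auto simp: adj_rel_def)
  then show ?case using step assms(3) by blast
qed

lemma card_ends: assumes n: "n \<in> nodes C" shows "card (ends C n) = 2"
proof (rule ccontr)
  assume c: "card (ends C n) \<noteq> 2"
  then have "card (ends C n) = 1" using wf n by (auto simp: wf_curve_def)
  then obtain v where e: "ends C n = {v}" using card_1_singleton_iff by (metis One_nat_def)
  have "adj_rel C (nodes C) \<subseteq> (adj_rel C (nodes C - {n}))\<^sup>*"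
  proof
    fix ab assume "ab \<in> adj_rel C (nodes C)"
    then obtain a b m where ab: "ab = (a,b)" "m \<in> nodes C" "a \<in> ends C m" "b \<in> ends C m"
      by (auto simp: adj_rel_def)
    show "ab \<in> (adj_rel C (nodes C - {n}))\<^sup>*"
    proof (cases "m = n")
      case True then show ?thesis using ab e by auto
    next
      case False then have "(a,b) \<in> adj_rel C (nodes C - {n})" using ab by (auto simp: adj_rel_def)
      then show ?thesis using ab by auto
    qed
  qed
  then have "(adj_rel C (nodes C))\<^sup>* \<subseteq> (adj_rel C (nodes C - {n}))\<^sup>*" by (rule rtrancl_subset_rtrancl)
  then have "connected_without C {n}" using conn unfolding connected_without_def by blast
  then show False using cpt n by (auto simp: compact_type_def separating_def)
qed

lemma ends2: "n \<in> nodes C \<Longrightarrow> \<exists>p q. ends C n = {p,q} \<and> p \<noteq> q"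
  using card_ends card_2_iff by blast

definition F where "F n = {v \<in> comps C. (X,v) \<notin> (adj_rel C (nodes C - {n}))\<^sup>*}"

lemma F_sub: "F n \<subseteq> comps C" by (auto simp: F_def)
lemma X_notin_F: "X \<notin> F n" by (auto simp: F_def)

lemma F_closed:
  assumes "m \<in> nodes C" "m \<noteq> n" "p \<in> ends C m" "q \<in> ends C m"
  shows "p \<in> F n \<longleftrightarrow> q \<in> F n"
proof -
  have pq: "(p,q) \<in> adj_rel C (nodes C - {n})" "(q,p) \<in> adj_rel C (nodes C - {n})"
    using assms by (auto simp: adj_rel_def)
  have c: "p \<in> comps C" "q \<in> comps C" using assms ends_sub by auto
  show ?thesis using pq c unfolding F_def by (auto intro: rtrancl_into_rtrancl)
qed

lemma F_ne: assumes n: "n \<in> nodes C" shows "F n \<noteq> {}"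
proof
  assume e: "F n = {}"
  from cpt n have "\<not> connected_without C {n}" by (auto simp: compact_type_def separating_def)
  then obtain u w where uw: "u \<in> comps C" "w \<in> comps C" "(u,w) \<notin> (adj_rel C (nodes C - {n}))\<^sup>*"
    by (auto simp: connected_without_def)
  have "(X,u) \<in> (adj_rel C (nodes C - {n}))\<^sup>*" "(X,w) \<in> (adj_rel C (nodes C - {n}))\<^sup>*"
    using e uw unfolding F_def by auto
  then show False using uw rtr_sym by (meson rtrancl_trans)
qed

lemma F_cross: assumes n: "n \<in> nodes C" shows "\<exists>u w. ends C n = {u,w} \<and> u \<in> F n \<and> w \<notin> F n"
proof (rule ccontr)
  assume a: "\<not> ?thesis"
  obtain p q where pq: "ends C n = {p,q}" "p \<noteq> q" using ends2 n by blast
  have iff: "p \<in> F n \<longleftrightarrow> q \<in> F n" using a pq by (metis insert_commute)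
  obtain v where v: "v \<in> F n" using F_ne n by blast
  have "(v, X) \<in> (adj_rel C (nodes C))\<^sup>*" using conn v F_sub Xc by blast
  then have "X \<in> F n"
  proof (rule closed_reach)
    show "v \<in> F n" by fact
    fix m a b assume m: "m \<in> nodes C" "a \<in> ends C m" "b \<in> ends C m" "a \<in> F n"
    show "b \<in> F n"
    proof (cases "m = n")
      case True then show ?thesis using m pq iff by auto
    next
      case False then show ?thesis using F_closed m by blast
    qed
  qed
  then show False using X_notin_F by blast
qed

definition aa where "aa n = (SOME u. u \<in> ends C n \<and> u \<in> F n)"
definition bb where "bb n = (SOME u. u \<in> ends C n \<and> u \<notin> F n)"

lemma aabb: assumes n: "n \<in> nodes C"
  shows "ends C n = {aa n, bb n}" "aa n \<in> F n" "bb n \<notin> F n" "aa n \<noteq> bb n"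
    "aa n \<in> comps C" "bb n \<in> comps C"
proof -
  obtain u w where uw: "ends C n = {u,w}" "u \<in> F n" "w \<notin> F n" using F_cross n by blast
  have a: "aa n \<in> ends C n \<and> aa n \<in> F n" unfolding aa_def by (rule someI[of _ u]) (use uw in auto)
  have b: "bb n \<in> ends C n \<and> bb n \<notin> F n" unfolding bb_def by (rule someI[of _ w]) (use uw in auto)
  have "aa n = u" "bb n = w" using a b uw by auto
  then show "ends C n = {aa n, bb n}" "aa n \<in> F n" "bb n \<notin> F n" "aa n \<noteq> bb n"
    using uw by auto
  then show "aa n \<in> comps C" "bb n \<in> comps C" using ends_sub n by auto
qed

definition cross where
  "cross Y = {n \<in> nodes C. ends C n \<inter> Y \<noteq> {} \<and> ends C n \<inter> (comps C - Y) \<noteq> {}}"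

lemma k_cross: "k_sub C Y = card (cross Y)" by (simp add: k_sub_def cross_def)

lemma cross_F: assumes n: "n \<in> nodes C" shows "cross (F n) = {n}"
proof
  show "{n} \<subseteq> cross (F n)" using aabb[OF n] n by (auto simp: cross_def)
  show "cross (F n) \<subseteq> {n}"
  proof
    fix m assume m: "m \<in> cross (F n)"
    then obtain p q where "p \<in> ends C m" "p \<in> F n" "q \<in> ends C m" "q \<notin> F n" "m \<in> nodes C"
      by (auto simp: cross_def)
    then show "m \<in> {n}" using F_closed by blast
  qed
qed

lemma tail_F: "n \<in> nodes C \<Longrightarrow> is_tail C (F n)"
  using cross_F F_sub by (simp add: is_tail_def k_cross)

lemma F_inj: "n \<in> nodes C \<Longrightarrow> m \<in> nodes C \<Longrightarrow> F n = F m \<Longrightarrow> n = m"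
  using cross_F by (metis singleton_inject)

lemma cross_compl: "Y \<subseteq> comps C \<Longrightarrow> cross (comps C - Y) = cross Y"
  unfolding cross_def by (auto simp: Diff_Diff_Int Int_absorb1)

lemma tail_is_F: assumes t: "is_tail C Z" and XZ: "X \<notin> Z" shows "\<exists>n\<in>nodes C. Z = F n"
proof -
  have Zc: "Z \<subseteq> comps C" using t by (simp add: is_tail_def)
  have "card (cross Z) = 1" using t by (simp add: is_tail_def k_cross)
  then obtain n where cz: "cross Z = {n}" using card_1_singleton_iff by (metis One_nat_def)
  then have n: "n \<in> nodes C" by (auto simp: cross_def)
  have cr: "\<And>m p q. m \<in> nodes C \<Longrightarrow> p \<in> ends C m \<Longrightarrow> q \<in> ends C m \<Longrightarrow> p \<in> Z \<Longrightarrow> q \<notin> Z \<Longrightarrow> m = n"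
  proof -
    fix m p q assume "m \<in> nodes C" "p \<in> ends C m" "q \<in> ends C m" "p \<in> Z" "q \<notin> Z"
    then have "m \<in> cross Z" using ends_sub by (auto simp: cross_def)
    then show "m = n" using cz by auto
  qed
  have "Z \<subseteq> F n"
  proof
    fix v assume v: "v \<in> Z"
    show "v \<in> F n"
    proof (rule ccontr)
      assume "v \<notin> F n"
      then have "(X,v) \<in> (adj_rel C (nodes C - {n}))\<^sup>*" using v Zc by (auto simp: F_def)
      then have "v \<in> comps C - Z"
      proof (rule closed_reach)
        show "X \<in> comps C - Z" using Xc XZ by auto
        fix m p q assume "m \<in> nodes C - {n}" "p \<in> ends C m" "q \<in> ends C m" "p \<in> comps C - Z"
        then show "q \<in> comps C - Z" using cr ends_sub by blast
      qed
      then show False using v by auto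
    qed
  qed
  moreover have "F n \<subseteq> Z"
  proof
    fix v assume v: "v \<in> F n"
    show "v \<in> Z"
    proof (rule ccontr)
      assume vz: "v \<notin> Z"
      have "(v, X) \<in> (adj_rel C (nodes C))\<^sup>*" using conn v F_sub Xc by blast
      then have "X \<in> F n - Z"
      proof (rule closed_reach)
        show "v \<in> F n - Z" using v vz by auto
        fix m p q assume m: "m \<in> nodes C" "p \<in> ends C m" "q \<in> ends C m" "p \<in> F n - Z"
        show "q \<in> F n - Z"
        proof (cases "m = n")
          case True
          have "ends C n \<inter> Z \<noteq> {}" using cz by (auto simp: cross_def)
          moreover have "bb n \<notin> Z" using aabb[OF n] \<open>Z \<subseteq> F n\<close> by auto
          ultimately have "aa n \<in> Z" using aabb[OF n] by auto
          then show ?thesis using m True aabb[OF n] by auto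
        next
          case False
          then have "q \<in> F n" using F_closed m by blast
          moreover have "q \<notin> Z" using cr m False by blast
          ultimately show ?thesis by blast
        qed
      qed
      then show False using X_notin_F by blast
    qed
  qed
  ultimately show ?thesis using n by blast
qed


lemma node_count:
  assumes n: "n \<in> nodes C" and Y: "Y \<subseteq> comps C"
  shows "(\<Sum>v\<in>Y. of_bool (v \<in> ends C n) :: int)
       = 2 * of_bool (ends C n \<subseteq> Y) + of_bool (n \<in> cross Y)"
proof -
  obtain p q where pq: "ends C n = {p,q}" "p \<noteq> q" using ends2 n by blast
  have pqc: "p \<in> comps C" "q \<in> comps C" using pq ends_sub n by auto
  have fY: "finite Y" using Y fin_comps finite_subset by blast
  have "(\<Sum>v\<in>Y. of_bool (v \<in> ends C n) :: int) = (\<Sum>v\<in>Y. (if v = p then 1 else 0) + (if v = q then 1 else 0))"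
    using pq by (intro sum.cong) auto
  also have "\<dots> = of_bool (p \<in> Y) + of_bool (q \<in> Y)" using fY by (simp add: sum.distrib)
  finally show ?thesis using pq pqc n by (auto simp: cross_def)
qed

lemma k_single: assumes v: "v \<in> comps C"
  shows "int (k_sub C {v}) = (\<Sum>n\<in>nodes C. of_bool (v \<in> ends C n))"
proof -
  have "int (k_sub C {v}) = (\<Sum>n\<in>nodes C. of_bool (n \<in> cross {v}))"
    using fin_nodes by (simp add: k_cross cross_def Int_def)
  also have "\<dots> = (\<Sum>n\<in>nodes C. of_bool (v \<in> ends C n))"
  proof (rule sum.cong)
    fix n assume n: "n \<in> nodes C"
    show "of_bool (n \<in> cross {v}) = (of_bool (v \<in> ends C n) :: int)"
      using aabb[OF n] v n by (auto simp: cross_def)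
  qed simp
  finally show ?thesis .
qed

lemma no_int_single: "card {n \<in> nodes C. ends C n \<subseteq> {v}} = 0"
proof -
  have "{n \<in> nodes C. ends C n \<subseteq> {v}} = {}"
    using card_ends by (fastforce simp: subset_singleton_iff)
  then show ?thesis by (simp only: card.empty)
qed

lemma omega_single: "v \<in> comps C \<Longrightarrow> deg_omega C {v} = 2 * int (ggen C v) - 2 + int (k_sub C {v})"
  by (simp add: deg_omega_def genus_sub_def chi_sub_def no_int_single)

lemma omega_add: assumes Y: "Y \<subseteq> comps C"
  shows "deg_omega C Y = (\<Sum>v\<in>Y. deg_omega C {v})"
proof -
  have fY: "finite Y" using Y fin_comps finite_subset by blast
  have I: "int (card {n \<in> nodes C. ends C n \<subseteq> Y}) = (\<Sum>n\<in>nodes C. of_bool (ends C n \<subseteq> Y))"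
    using fin_nodes by (simp add: Int_def)
  have K: "int (k_sub C Y) = (\<Sum>n\<in>nodes C. of_bool (n \<in> cross Y))"
    using fin_nodes by (simp add: k_cross cross_def Int_def)
  have "2 * int (card {n \<in> nodes C. ends C n \<subseteq> Y}) + int (k_sub C Y)
      = (\<Sum>n\<in>nodes C. 2 * of_bool (ends C n \<subseteq> Y) + of_bool (n \<in> cross Y))"
    unfolding I K by (simp add: sum.distrib sum_distrib_left)
  also have "\<dots> = (\<Sum>n\<in>nodes C. \<Sum>v\<in>Y. of_bool (v \<in> ends C n))"
    using node_count Y by (intro sum.cong) auto
  also have "\<dots> = (\<Sum>v\<in>Y. \<Sum>n\<in>nodes C. of_bool (v \<in> ends C n))" by (rule sum.swap)
  also have "\<dots> = (\<Sum>v\<in>Y. int (k_sub C {v}))" using k_single Y by (intro sum.cong) auto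
  finally have e: "2 * int (card {n \<in> nodes C. ends C n \<subseteq> Y}) + int (k_sub C Y) = (\<Sum>v\<in>Y. int (k_sub C {v}))" .
  have "deg_omega C Y = - 2 * (\<Sum>v\<in>Y. 1 - int (ggen C v)) + (2 * int (card {n \<in> nodes C. ends C n \<subseteq> Y}) + int (k_sub C Y))"
    by (simp add: deg_omega_def genus_sub_def chi_sub_def)
  also have "\<dots> = (\<Sum>v\<in>Y. (- 2) * (1 - int (ggen C v)) + int (k_sub C {v}))"
    unfolding e by (simp only: sum.distrib sum_distrib_left)
  also have "\<dots> = (\<Sum>v\<in>Y. 2 * int (ggen C v) - 2 + int (k_sub C {v}))"
    by (intro sum.cong) auto
  also have "\<dots> = (\<Sum>v\<in>Y. deg_omega C {v})" using omega_single Y by (intro sum.cong) auto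
  finally show ?thesis .
qed

lemma omega_single_nonneg: assumes v: "v \<in> comps C" shows "0 \<le> deg_omega C {v}"
proof (cases "ggen C v = 0")
  case True
  have "\<forall>n\<in>nodes C. ends C n \<noteq> {v}"
  proof
    fix n assume "n \<in> nodes C"
    then have "card (ends C n) = 2" by (rule card_ends)
    then show "ends C n \<noteq> {v}" by auto
  qed
  then have "k_sub C {v} \<ge> 3" using stb v True by (auto simp: stable_def)
  then show ?thesis using omega_single[OF v] True by simp
next
  case False then show ?thesis using omega_single[OF v] by simp
qed

lemma omega_nonneg: "Y \<subseteq> comps C \<Longrightarrow> 0 \<le> deg_omega C Y"
proof -
  assume Y: "Y \<subseteq> comps C"
  have "0 \<le> (\<Sum>v\<in>Y. deg_omega C {v})" using Y omega_single_nonneg by (intro sum_nonneg) blast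
  then show ?thesis using omega_add[OF Y] by simp
qed

lemma cross_comps: "cross (comps C) = {}" by (auto simp: cross_def)

lemma omega_comps: "deg_omega C (comps C) = 2 * genus C - 2"
  by (simp add: deg_omega_def genus_def k_cross cross_comps)

lemma Dpos: "real_of_int (2 * genus C - 2) > 0" using g2 by simp

lemma bal_add: assumes Y: "Y \<subseteq> comps C"
  shows "balance C m Y = (\<Sum>v\<in>Y. balance C m {v})"
proof -
  define c where "c = real_of_int (total_deg C m) / real_of_int (2 * genus C - 2)"
  have w: "real_of_int (deg_omega C Y) = (\<Sum>v\<in>Y. real_of_int (deg_omega C {v}))"
    using omega_add[OF Y] by (simp only: of_int_sum)
  have d: "real_of_int (deg_sub m Y) = (\<Sum>v\<in>Y. real_of_int (m v))"
    unfolding deg_sub_def by (simp only: of_int_sum)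
  have "balance C m Y = (\<Sum>v\<in>Y. real_of_int (m v)) - c * (\<Sum>v\<in>Y. real_of_int (deg_omega C {v}))"
    unfolding balance_def c_def w d ..
  also have "\<dots> = (\<Sum>v\<in>Y. real_of_int (m v) - c * real_of_int (deg_omega C {v}))"
    by (simp only: sum_subtractf sum_distrib_left)
  also have "\<dots> = (\<Sum>v\<in>Y. balance C m {v})"
    by (intro sum.cong) (simp_all add: balance_def c_def deg_sub_def)
  finally show ?thesis .
qed

lemma bal_comps: "balance C m (comps C) = 0"
  using Dpos by (simp add: balance_def omega_comps total_deg_def)

lemma bal_compl: assumes Y: "Y \<subseteq> comps C"
  shows "balance C m (comps C - Y) = - balance C m Y"
proof -
  have "(\<Sum>v\<in>comps C. balance C m {v}) = (\<Sum>v\<in>comps C - Y. balance C m {v}) + (\<Sum>v\<in>Y. balance C m {v})"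
    using sum.subset_diff[OF Y fin_comps] .
  moreover have "balance C m (comps C - Y) = (\<Sum>v\<in>comps C - Y. balance C m {v})"
    by (rule bal_add) blast
  moreover have "balance C m (comps C) = (\<Sum>v\<in>comps C. balance C m {v})"
    by (rule bal_add) blast
  ultimately show ?thesis using bal_add[OF Y, of m] bal_comps[of m] by linarith
qed

lemma omega_compl: assumes Y: "Y \<subseteq> comps C"
  shows "deg_omega C Y + deg_omega C (comps C - Y) = 2 * genus C - 2"
proof -
  have "(\<Sum>v\<in>comps C. deg_omega C {v}) = (\<Sum>v\<in>comps C - Y. deg_omega C {v}) + (\<Sum>v\<in>Y. deg_omega C {v})"
    using sum.subset_diff[OF Y fin_comps] .
  moreover have "deg_omega C (comps C - Y) = (\<Sum>v\<in>comps C - Y. deg_omega C {v})"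
    by (rule omega_add) blast
  moreover have "deg_omega C (comps C) = (\<Sum>v\<in>comps C. deg_omega C {v})"
    by (rule omega_add) blast
  ultimately show ?thesis using omega_add[OF Y] omega_comps by linarith
qed

definition eps where "eps n Y = (of_bool (aa n \<in> Y) - of_bool (bb n \<in> Y) :: real)"

lemma Phi: assumes v: "v \<in> comps C"
  shows "(\<Sum>n\<in>nodes C. eps n Y * of_bool (v \<in> F n)) = of_bool (v \<in> Y) - of_bool (X \<in> Y)"
proof -
  define \<Phi> where "\<Phi> x = (\<Sum>n\<in>nodes C. eps n Y * of_bool (x \<in> F n)) - of_bool (x \<in> Y)" for x
  have key: "\<Phi> (aa m) = \<Phi> (bb m)" if m: "m \<in> nodes C" for m
  proof -
    have "(\<Sum>n\<in>nodes C. eps n Y * (of_bool (aa m \<in> F n) - of_bool (bb m \<in> F n)))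
        = eps m Y * (of_bool (aa m \<in> F m) - of_bool (bb m \<in> F m))
          + (\<Sum>n\<in>nodes C - {m}. eps n Y * (of_bool (aa m \<in> F n) - of_bool (bb m \<in> F n)))"
      using sum.remove[OF fin_nodes m] .
    also have "(\<Sum>n\<in>nodes C - {m}. eps n Y * (of_bool (aa m \<in> F n) - of_bool (bb m \<in> F n))) = 0"
    proof (rule sum.neutral, rule ballI)
      fix n assume "n \<in> nodes C - {m}"
      then have "aa m \<in> F n \<longleftrightarrow> bb m \<in> F n" using F_closed[of m n] m aabb[OF m] by auto
      then show "eps n Y * (of_bool (aa m \<in> F n) - of_bool (bb m \<in> F n)) = 0" by simp
    qed
    finally have "(\<Sum>n\<in>nodes C. eps n Y * (of_bool (aa m \<in> F n) - of_bool (bb m \<in> F n))) = eps m Y"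
      using aabb[OF m] by simp
    then show ?thesis unfolding \<Phi>_def eps_def
      by (simp add: right_diff_distrib sum_subtractf)
  qed
  have "(X, v) \<in> (adj_rel C (nodes C))\<^sup>*" using conn Xc v by blast
  then have "\<Phi> v = \<Phi> X"
  proof (induction rule: rtrancl_induct)
    case base then show ?case by simp
  next
    case (step y z)
    then obtain m where m: "m \<in> nodes C" "y \<in> ends C m" "z \<in> ends C m" by (auto simp: adj_rel_def)
    then have "\<Phi> z = \<Phi> y" using key[OF m(1)] aabb(1)[OF m(1)] by auto
    then show ?case using step by simp
  qed
  moreover have "\<Phi> X = - of_bool (X \<in> Y)" by (simp add: \<Phi>_def X_notin_F)
  ultimately show ?thesis unfolding \<Phi>_def by simp
qed

lemma restr: assumes S: "S \<subseteq> comps C"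
  shows "(\<Sum>v\<in>comps C. of_bool (v \<in> S) * f v) = (\<Sum>v\<in>S. (f v :: real))"
proof -
  have "(\<Sum>v\<in>comps C. of_bool (v \<in> S) * f v) = (\<Sum>v\<in>comps C. if v \<in> S then f v else 0)"
    by (intro sum.cong) auto
  also have "\<dots> = sum f (comps C \<inter> S)" by (simp add: sum.inter_restrict[OF fin_comps])
  also have "comps C \<inter> S = S" using S by blast
  finally show ?thesis .
qed

lemma decomp: assumes Y: "Y \<subseteq> comps C"
  shows "balance C m Y = (\<Sum>n\<in>nodes C. eps n Y * balance C m (F n))"
proof -
  define b where "b v = balance C m {v}" for v
  have "(\<Sum>n\<in>nodes C. eps n Y * balance C m (F n))
      = (\<Sum>n\<in>nodes C. eps n Y * (\<Sum>v\<in>comps C. of_bool (v \<in> F n) * b v))"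
  proof (rule sum.cong)
    fix n assume "n \<in> nodes C"
    have "balance C m (F n) = (\<Sum>v\<in>F n. b v)" unfolding b_def using bal_add F_sub by blast
    also have "\<dots> = (\<Sum>v\<in>comps C. of_bool (v \<in> F n) * b v)"
      using restr[OF F_sub[of n]] by simp
    finally show "eps n Y * balance C m (F n) = eps n Y * (\<Sum>v\<in>comps C. of_bool (v \<in> F n) * b v)" by simp
  qed simp
  also have "\<dots> = (\<Sum>n\<in>nodes C. \<Sum>v\<in>comps C. b v * (eps n Y * of_bool (v \<in> F n)))"
    by (simp add: sum_distrib_left mult_ac)
  also have "\<dots> = (\<Sum>v\<in>comps C. \<Sum>n\<in>nodes C. b v * (eps n Y * of_bool (v \<in> F n)))"
    by (rule sum.swap)
  also have "\<dots> = (\<Sum>v\<in>comps C. b v * (\<Sum>n\<in>nodes C. eps n Y * of_bool (v \<in> F n)))"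
    by (simp add: sum_distrib_left)
  also have "\<dots> = (\<Sum>v\<in>comps C. b v * (of_bool (v \<in> Y) - of_bool (X \<in> Y)))"
    using Phi by (intro sum.cong) auto
  also have "\<dots> = (\<Sum>v\<in>comps C. of_bool (v \<in> Y) * b v) - of_bool (X \<in> Y) * (\<Sum>v\<in>comps C. b v)"
    by (simp add: right_diff_distrib sum_subtractf sum_distrib_left mult_ac)
  also have "(\<Sum>v\<in>comps C. b v) = 0" unfolding b_def using bal_add[of "comps C"] bal_comps by simp
  also have "(\<Sum>v\<in>comps C. of_bool (v \<in> Y) * b v) = (\<Sum>v\<in>Y. b v)"
    using restr[OF Y] by simp
  also have "\<dots> = balance C m Y" unfolding b_def using bal_add[OF Y] by simp
  finally show ?thesis by simp
qed


lemma eps_zero: "n \<in> nodes C \<Longrightarrow> Y \<subseteq> comps C \<Longrightarrow> n \<notin> cross Y \<Longrightarrow> eps n Y = 0"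
  using aabb[of n] by (auto simp: cross_def eps_def)

lemma eps_vals: "n \<in> nodes C \<Longrightarrow> eps n Y = -1 \<or> eps n Y = 0 \<or> eps n Y = 1"
  by (auto simp: eps_def)

lemma bal_eq: "balance C m Y = real_of_int (deg_sub m Y * (2 * genus C - 2) - total_deg C m * deg_omega C Y) / real_of_int (2 * genus C - 2)"
  using Dpos unfolding balance_def by (simp add: field_simps)

lemma bal_int_le: "(balance C m Y \<le> r) \<longleftrightarrow> real_of_int (deg_sub m Y * (2 * genus C - 2) - total_deg C m * deg_omega C Y) \<le> r * real_of_int (2 * genus C - 2)"
  unfolding bal_eq using Dpos by (simp add: divide_le_eq)
lemma bal_int_less: "(balance C m Y < r) \<longleftrightarrow> real_of_int (deg_sub m Y * (2 * genus C - 2) - total_deg C m * deg_omega C Y) < r * real_of_int (2 * genus C - 2)"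
  unfolding bal_eq using Dpos by (simp add: divide_less_eq)
lemma bal_int_ge: "(r \<le> balance C m Y) \<longleftrightarrow> r * real_of_int (2 * genus C - 2) \<le> real_of_int (deg_sub m Y * (2 * genus C - 2) - total_deg C m * deg_omega C Y)"
  unfolding bal_eq using Dpos by (simp add: le_divide_eq)

end

locale CTm = CT C X for C :: "('v,'n) nodal_curve" and X +
  fixes md :: "'v multideg"
  assumes qs: "quasistable C X md"
begin

definition md' where "md' = (\<lambda>v. md v + unit_mdeg X v - (\<Sum>Z\<in>big_tails C md X. mdeg_OZ C Z v))"

lemma T_F: "Z \<in> big_tails C md X \<Longrightarrow> \<exists>n\<in>nodes C. Z = F n"
  using tail_is_F by (auto simp: big_tails_def big_tail_def)

lemma fin_T: "finite (big_tails C md X)"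
proof (rule finite_subset)
  show "big_tails C md X \<subseteq> F ` nodes C" using T_F by blast
  show "finite (F ` nodes C)" using fin_nodes by simp
qed

lemma mdegF: assumes n: "n \<in> nodes C" and Y: "Y \<subseteq> comps C"
  shows "deg_sub (mdeg_OZ C (F n)) Y = (if bb n \<in> Y then 1 else 0) - (if aa n \<in> Y then 1 else 0)"
proof -
  have fY: "finite Y" using Y fin_comps finite_subset by blast
  have cs: "{n' \<in> nodes C. ends C n' \<inter> F n \<noteq> {} \<and> ends C n' \<inter> (comps C - F n) \<noteq> {}} = {n}"
    using cross_F[OF n] by (simp add: cross_def)
  have e: "mdeg_OZ C (F n) v = (if v = bb n then 1 else 0) - (if v = aa n then 1 else 0)" for v
    unfolding mdeg_OZ_def cs using aabb[OF n] by auto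
  show ?thesis unfolding deg_sub_def e using fY by (simp add: sum_subtractf)
qed

lemma mdeg_on_F: assumes Z: "Z \<in> big_tails C md X" and n: "n \<in> nodes C"
  shows "deg_sub (mdeg_OZ C Z) (F n) = - (if Z = F n then 1 else 0)"
proof -
  obtain m where m: "m \<in> nodes C" "Z = F m" using T_F Z by blast
  show ?thesis
  proof (cases "m = n")
    case True then show ?thesis using mdegF[OF m(1) F_sub] aabb[OF m(1)] m by simp
  next
    case False
    then have "aa m \<in> F n \<longleftrightarrow> bb m \<in> F n" using F_closed[of m n] m aabb[OF m(1)] by auto
    moreover have "Z \<noteq> F n" using F_inj m n False by blast
    ultimately show ?thesis using mdegF[OF m(1) F_sub] m by simp
  qed
qed

lemma mdeg_comps: assumes Z: "Z \<in> big_tails C md X"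
  shows "deg_sub (mdeg_OZ C Z) (comps C) = 0"
proof -
  obtain m where m: "m \<in> nodes C" "Z = F m" using T_F Z by blast
  show ?thesis using mdegF[OF m(1), of "comps C"] aabb[OF m(1)] m by simp
qed

lemma deg_md': assumes Y: "Y \<subseteq> comps C"
  shows "deg_sub md' Y = deg_sub md Y + (if X \<in> Y then 1 else 0) - (\<Sum>Z\<in>big_tails C md X. deg_sub (mdeg_OZ C Z) Y)"
proof -
  have fY: "finite Y" using Y fin_comps finite_subset by blast
  have "deg_sub md' Y = (\<Sum>v\<in>Y. md v) + (\<Sum>v\<in>Y. unit_mdeg X v) - (\<Sum>v\<in>Y. \<Sum>Z\<in>big_tails C md X. mdeg_OZ C Z v)"
    unfolding md'_def deg_sub_def by (simp only: sum.distrib sum_subtractf)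
  also have "(\<Sum>v\<in>Y. \<Sum>Z\<in>big_tails C md X. mdeg_OZ C Z v) = (\<Sum>Z\<in>big_tails C md X. \<Sum>v\<in>Y. mdeg_OZ C Z v)"
    by (rule sum.swap)
  also have "(\<Sum>v\<in>Y. unit_mdeg X v) = (if X \<in> Y then 1 else 0)"
    unfolding unit_mdeg_def using fY by simp
  finally show ?thesis by (simp add: deg_sub_def)
qed

lemma total': "total_deg C md' = total_deg C md + 1"
  using deg_md'[of "comps C"] mdeg_comps Xc by (simp add: total_deg_def)

lemma degF': assumes n: "n \<in> nodes C"
  shows "deg_sub md' (F n) = deg_sub md (F n) + (if F n \<in> big_tails C md X then 1 else 0)"
proof -
  have "(\<Sum>Z\<in>big_tails C md X. deg_sub (mdeg_OZ C Z) (F n)) = (\<Sum>Z\<in>big_tails C md X. - (if Z = F n then 1 else 0))"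
    using mdeg_on_F n by (intro sum.cong) auto
  also have "\<dots> = - (if F n \<in> big_tails C md X then 1 else 0)"
    using fin_T by (simp add: sum_negf)
  finally show ?thesis using deg_md'[OF F_sub] X_notin_F by simp
qed


lemma tail_bounds: assumes n: "n \<in> nodes C"
  shows "- 1/2 \<le> balance C md' (F n) \<and> balance C md' (F n) < 1/2"
proof -
  define G where "G = genus C"
  define w where "w = deg_omega C (F n)"
  define gF where "gF = genus_sub C (F n)"
  define d where "d = total_deg C md"
  define dF where "dF = deg_sub md (F n)"
  define t :: int where "t = (if F n \<in> big_tails C md X then 1 else 0)"
  define A where "A = dF * (2 * G - 2) - d * w"
  define A' where "A' = deg_sub md' (F n) * (2 * G - 2) - total_deg C md' * w"
  have kF: "k_sub C (F n) = 1" using tail_F[OF n] by (simp add: is_tail_def)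
  have w1: "w = 2 * gF - 1" using kF unfolding w_def gF_def deg_omega_def by simp
  have w0: "0 \<le> w" unfolding w_def using omega_nonneg F_sub by blast
  have w2: "w \<le> 2 * G - 2" using omega_compl[OF F_sub[of n]] omega_nonneg[of "comps C - F n"]
    unfolding w_def G_def by auto
  have A'A: "A' = A + t * (2 * G - 2) - w"
    unfolding A'_def A_def using degF'[OF n] total' unfolding t_def dF_def d_def
    by (simp add: algebra_simps)
  have Fne: "F n \<noteq> {}" using F_ne n .
  have Fp: "F n \<noteq> comps C" using X_notin_F Xc by blast
  have ss: "\<bar>balance C md (F n)\<bar> \<le> real (k_sub C (F n)) / 2"
    using qs F_sub Fne Fp by (auto simp: quasistable_def semistable_def)
  have Gc: "comps C - F n \<noteq> comps C" using Fne F_sub by blast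
  have q2: "balance C md (comps C - F n) > - real (k_sub C (comps C - F n)) / 2"
    using qs Gc Xc X_notin_F by (auto simp: quasistable_def)
  have kG: "k_sub C (comps C - F n) = 1" using kF by (simp add: k_cross cross_compl[OF F_sub])
  have b1: "- 1/2 \<le> balance C md (F n)" using ss kF by simp
  have b2: "balance C md (F n) < 1/2" using q2 kG bal_compl[OF F_sub] by simp
  have i1: "- (2 * G - 2) \<le> 2 * A"
  proof -
    have "(- 1/2) * real_of_int (2 * genus C - 2) \<le> real_of_int A"
      using b1 unfolding bal_int_ge A_def dF_def d_def w_def G_def .
    then have "real_of_int (- (2 * G - 2)) \<le> real_of_int (2 * A)" unfolding G_def by (simp add: field_simps)
    then show ?thesis by (simp only: of_int_le_iff)
  qed
  have i2: "2 * A < 2 * G - 2"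
  proof -
    have "real_of_int A < (1/2) * real_of_int (2 * genus C - 2)"
      using b2 unfolding bal_int_less A_def dF_def d_def w_def G_def .
    then have "real_of_int (2 * A) < real_of_int (2 * G - 2)" unfolding G_def by (simp add: field_simps)
    then show ?thesis by (simp only: of_int_less_iff)
  qed
  have big: "F n \<in> big_tails C md X \<longleftrightarrow> A < 2 * gF - G"
    using tail_F[OF n] X_notin_F
    unfolding big_tails_def big_tail_def A_def dF_def d_def w_def gF_def G_def by auto
  have j: "- (2 * G - 2) \<le> 2 * A' \<and> 2 * A' < 2 * G - 2"
  proof (cases "F n \<in> big_tails C md X")
    case True
    then have "t = 1" "A < 2 * gF - G" using big by (auto simp: t_def)
    then have "A' = A + (2 * G - 2) - w" using A'A by simp
    then show ?thesis using \<open>A < 2 * gF - G\<close> w1 w2 i1 by linarith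
  next
    case False
    then have "t = 0" "\<not> A < 2 * gF - G" using big by (auto simp: t_def)
    then have "A' = A - w" using A'A by simp
    then show ?thesis using \<open>\<not> A < 2 * gF - G\<close> w1 w0 i2 by linarith
  qed
  have r1: "real_of_int (- (2 * G - 2)) \<le> real_of_int (2 * A')" using j by (simp only: of_int_le_iff)
  have r2: "real_of_int (2 * A') < real_of_int (2 * G - 2)" using j by (simp only: of_int_less_iff)
  have "(- 1/2) * real_of_int (2 * G - 2) \<le> real_of_int A'"
    using r1 by (simp only: of_int_minus of_int_mult of_int_numeral) (simp add: field_simps)
  then have "- 1/2 \<le> balance C md' (F n)"
    unfolding bal_int_ge A'_def w_def G_def .
  moreover have "real_of_int A' < (1/2) * real_of_int (2 * G - 2)"
    using r2 by (simp only: of_int_minus of_int_mult of_int_numeral) (simp add: field_simps)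
  then have "balance C md' (F n) < 1/2"
    unfolding bal_int_less A'_def w_def G_def .
  ultimately show ?thesis by simp
qed

lemma bal_cross: assumes Y: "Y \<subseteq> comps C"
  shows "balance C md' Y = (\<Sum>n\<in>cross Y. eps n Y * balance C md' (F n))"
proof -
  have "balance C md' Y = (\<Sum>n\<in>nodes C. eps n Y * balance C md' (F n))" using decomp[OF Y] .
  also have "\<dots> = (\<Sum>n\<in>cross Y. eps n Y * balance C md' (F n))"
    by (rule sum.mono_neutral_right) (use fin_nodes eps_zero Y in \<open>auto simp: cross_def\<close>)
  finally show ?thesis .
qed

lemma main_q: "quasistable C X md'"
proof -
  have fc: "finite (cross Y)" for Y using fin_nodes by (simp add: cross_def)
  have tm: "- 1/2 \<le> eps n Y * balance C md' (F n) \<and> eps n Y * balance C md' (F n) \<le> 1/2"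
    if n: "n \<in> nodes C" for n Y
    using eps_vals[OF n, of Y] tail_bounds[OF n] by auto
  have cn: "n \<in> cross Y \<Longrightarrow> n \<in> nodes C" for n Y by (simp add: cross_def)
  have semi: "semistable C md'"
    unfolding semistable_def
  proof (intro allI impI)
    fix Y assume Y: "Y \<subseteq> comps C \<and> Y \<noteq> {} \<and> Y \<noteq> comps C"
    have "\<bar>balance C md' Y\<bar> \<le> (\<Sum>n\<in>cross Y. \<bar>eps n Y * balance C md' (F n)\<bar>)"
      unfolding bal_cross[OF conjunct1[OF Y]] by (rule sum_abs)
    also have "\<dots> \<le> (\<Sum>n\<in>cross Y. 1/2)"
    proof (rule sum_mono)
      fix n assume "n \<in> cross Y"
      then have "- 1/2 \<le> eps n Y * balance C md' (F n) \<and> eps n Y * balance C md' (F n) \<le> 1/2"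
        using tm cn by blast
      then show "\<bar>eps n Y * balance C md' (F n)\<bar> \<le> 1/2" by linarith
    qed
    also have "\<dots> = real (k_sub C Y) / 2" by (simp add: k_cross)
    finally show "\<bar>balance C md' Y\<bar> \<le> real (k_sub C Y) / 2" .
  qed
  have strict: "balance C md' Y > - real (k_sub C Y) / 2"
    if Y: "Y \<subseteq> comps C" "Y \<noteq> comps C" "X \<in> Y" for Y
  proof -
    obtain v where v: "v \<in> comps C" "v \<notin> Y" using Y by blast
    have "(\<Sum>n\<in>nodes C. eps n Y * of_bool (v \<in> F n)) = -1" using Phi[OF v(1), of Y] v Y by simp
    then have "\<exists>n\<in>nodes C. eps n Y * of_bool (v \<in> F n) < 0"
    proof (rule contrapos_pp)
      assume "\<not> (\<exists>n\<in>nodes C. eps n Y * of_bool (v \<in> F n) < 0)"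
      then have "0 \<le> (\<Sum>n\<in>nodes C. eps n Y * of_bool (v \<in> F n))"
        by (intro sum_nonneg) (auto simp: not_less)
      then show "(\<Sum>n\<in>nodes C. eps n Y * of_bool (v \<in> F n)) \<noteq> -1" by linarith
    qed
    then obtain n where n: "n \<in> nodes C" "eps n Y * of_bool (v \<in> F n) < 0" by blast
    then have en: "eps n Y = -1" using eps_vals[OF n(1), of Y] by (cases "v \<in> F n") auto
    then have nc: "n \<in> cross Y" using eps_zero[OF n(1) Y(1)] by fastforce
    have "(\<Sum>n\<in>cross Y. (- 1/2::real)) < (\<Sum>n\<in>cross Y. eps n Y * balance C md' (F n))"
    proof (rule sum_strict_mono_ex1)
      show "finite (cross Y)" by (rule fc)
      show "\<forall>x\<in>cross Y. - 1 / 2 \<le> eps x Y * balance C md' (F x)" using tm cn by blast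
      show "\<exists>a\<in>cross Y. - 1 / 2 < eps a Y * balance C md' (F a)"
        using nc en tail_bounds[OF n(1)] by (intro bexI[of _ n]) auto
    qed
    then show ?thesis unfolding bal_cross[OF Y(1)] by (simp add: k_cross)
  qed
  show ?thesis unfolding quasistable_def using semi strict by blast
qed

end

theorem mainTheorem3:
  fixes C :: "('v, 'n) nodal_curve" and X :: 'v and md :: "'v multideg"
  assumes "wf_curve C" and "compact_type C" and "stable C" and "genus C \<ge> 2"
    and "X \<in> comps C"
    and "quasistable C X md"
  shows "quasistable C X
           (\<lambda>v. md v + unit_mdeg X v - (\<Sum>Z\<in>big_tails C md X. mdeg_OZ C Z v))"
proof -
  interpret CTm C X md using assms by (unfold_locales) auto
  show ?thesis using main_q unfolding md'_def .
qed
end
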